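(* Every affine bijection $\sigma:\mathcal{G}_N\to\mathcal{G}_N$ maps the set $\mathcal{I}$ of Ising matrices onto $\mathcal{I}$.
   Context: $\mathcal{G}_N$ is the set of real symmetric positive semi-definite $N\times N$ matrices with unit diagonal; $\mathcal{I}\subseteq\mathcal{G}_N$ is the set of its rank-one elements, i.e. the matrices $\mathbf{s}\mathbf{s}^\top$ with $\mathbf{s}\in\{\pm1\}^N$. *)

theory Defs
  imports "HOL-Analysis.Analysis"
begin

text \<open>N x N real matrices are represented as real^'n^'n with 'n a finite index type (N = CARD('n)).\<close>

definition psd :: "real^'n^'n \<Rightarrow> bool" where
  "psd A \<longleftrightarrow> (\<forall>x. 0 \<le> x \<bullet> (A *v x))"

definition elliptope :: "(real^'n^'n) set" where
  "elliptope = {A. transpose A = A \<and> psd A \<and> (\<forall>i. A $ i $ i = 1)}"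

definition ising :: "(real^'n^'n) set" where
  "ising = {(\<chi> i j. s $ i * s $ j) | s :: real^'n. \<forall>i. s $ i = 1 \<or> s $ i = -1}"

definition affine_on :: "'a::real_vector set \<Rightarrow> ('a \<Rightarrow> 'b::real_vector) \<Rightarrow> bool" where
  "affine_on S f \<longleftrightarrow> (\<forall>x\<in>S. \<forall>y\<in>S. \<forall>t::real. 0 \<le> t \<and> t \<le> 1 \<longrightarrow>
      f ((1 - t) *\<^sub>R x + t *\<^sub>R y) = (1 - t) *\<^sub>R f x + t *\<^sub>R f y)"

end

theory Submission
  imports Defs
begin

lemma mv_axis: "((A::real^'n^'n) *v axis q b) $ p = A $ p $ q * b"
  by (simp add: matrix_vector_mult_def axis_def if_distrib sum.delta' cong: if_cong)

lemma inner_axis_mv: "axis p a \<bullet> (A *v axis q b) = a * b * (A::real^'n^'n) $ p $ q"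
  by (simp add: inner_axis' mv_axis)

lemma inner_self_ge_comp: "(x::real^'n) $ k * x $ k \<le> x \<bullet> x"
proof -
  have "x \<bullet> x = (\<Sum>i\<in>UNIV. x $ i * x $ i)" by (simp add: inner_vec_def)
  also have "\<dots> \<ge> x $ k * x $ k" by (rule member_le_sum) auto
  finally show ?thesis .
qed

lemma ell_sym: assumes "A \<in> elliptope" shows "A $ l $ k = A $ k $ l"
proof -
  have "transpose A = A" using assms unfolding elliptope_def by auto
  then have "(transpose A) $ l $ k = A $ l $ k" by simp
  then show ?thesis by (simp add: transpose_def)
qed

lemma ell_diag: "A \<in> elliptope \<Longrightarrow> A $ k $ k = 1"
  unfolding elliptope_def by auto

lemma ell_psd: "A \<in> elliptope \<Longrightarrow> 0 \<le> x \<bullet> (A *v x)"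
  unfolding elliptope_def psd_def by auto

lemma quad2:
  "(axis k a + axis l b) \<bullet> ((A::real^'n^'n) *v (axis k a + axis l b))
    = a*a*A$k$k + a*b*A$k$l + b*a*A$l$k + b*b*A$l$l"
  by (simp add: matrix_vector_right_distrib inner_add_left inner_add_right inner_axis_mv)

lemma ell_bound: assumes "A \<in> elliptope" shows "\<bar>A $ k $ l\<bar> \<le> 1"
proof (cases "k = l")
  case True then show ?thesis using ell_diag[OF assms] by simp
next
  case False
  have s: "A $ l $ k = A $ k $ l" by (rule ell_sym[OF assms])
  have "0 \<le> 2 + 2 * A $ k $ l"
    using ell_psd[OF assms, of "axis k 1 + axis l 1"] quad2[of k 1 l 1 A] s ell_diag[OF assms] by simp
  moreover have "0 \<le> 2 - 2 * A $ k $ l"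
    using ell_psd[OF assms, of "axis k 1 + axis l (-1)"] quad2[of k 1 l "-1" A] s ell_diag[OF assms] by simp
  ultimately show ?thesis by linarith
qed

definition n1 :: "real^'n^'n \<Rightarrow> real" where
  "n1 A = (\<Sum>k\<in>UNIV. \<Sum>l\<in>UNIV. \<bar>A $ k $ l\<bar>)"

lemma n1_ge_entry: "\<bar>A $ i $ j\<bar> \<le> n1 A"
proof -
  have "\<bar>A $ i $ j\<bar> \<le> (\<Sum>l\<in>UNIV. \<bar>A $ i $ l\<bar>)" by (rule member_le_sum) auto
  also have "\<dots> \<le> n1 A" unfolding n1_def by (rule member_le_sum) (auto intro: sum_nonneg)
  finally show ?thesis .
qed

lemma n1_nonneg: "0 \<le> n1 A"
  unfolding n1_def by (auto intro!: sum_nonneg)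

lemma n1_add: "n1 (A + B) \<le> n1 A + n1 B"
  unfolding n1_def sum.distrib[symmetric] by (intro sum_mono) (simp add: abs_triangle_ineq)

lemma n1_scale: "n1 (c *\<^sub>R A) = \<bar>c\<bar> * n1 A"
  unfolding n1_def by (simp add: abs_mult sum_distrib_left)

lemma n1_bound: fixes A :: "real^'n^'n" assumes "\<And>k l. \<bar>A $ k $ l\<bar> \<le> c" shows "n1 A \<le> real CARD('n) ^ 2 * c"
proof -
  have "n1 A \<le> (\<Sum>k\<in>(UNIV::'n set). \<Sum>l\<in>(UNIV::'n set). c)"
    unfolding n1_def by (rule sum_mono, rule sum_mono, rule assms)
  then show ?thesis by (simp add: power2_eq_square)
qed

lemma n1_ell: assumes "A \<in> elliptope" shows "n1 (A::real^'n^'n) \<le> real CARD('n) ^ 2"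
proof -
  have "\<And>k l. \<bar>A $ k $ l\<bar> \<le> 1" using ell_bound assms by blast
  then show ?thesis using n1_bound[of A 1] by simp
qed

lemma n1_minus: "n1 (A - B) = n1 (B - A)"
  unfolding n1_def by (simp add: abs_minus_commute)

lemma convex_ell:
  assumes "A \<in> elliptope" "B \<in> elliptope" "0 \<le> t" "t \<le> 1"
  shows "(1 - t) *\<^sub>R A + t *\<^sub>R B \<in> elliptope"
proof -
  have tA: "transpose A = A" "transpose B = B" using assms unfolding elliptope_def by auto
  have "transpose ((1 - t) *\<^sub>R A + t *\<^sub>R B) = (1 - t) *\<^sub>R A + t *\<^sub>R B"
    using tA by (simp add: transpose_def vec_eq_iff)
  moreover have "psd ((1 - t) *\<^sub>R A + t *\<^sub>R B)"
    unfolding psd_def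
  proof
    fix x
    have "x \<bullet> (((1 - t) *\<^sub>R A + t *\<^sub>R B) *v x) = (1 - t) * (x \<bullet> (A *v x)) + t * (x \<bullet> (B *v x))"
      by (simp add: matrix_vector_mult_add_rdistrib scaleR_matrix_vector_assoc[symmetric] inner_add_right)
    also have "\<dots> \<ge> 0" using assms(3,4) ell_psd[OF assms(1), of x] ell_psd[OF assms(2), of x]
      by (intro add_nonneg_nonneg mult_nonneg_nonneg) auto
    finally show "0 \<le> x \<bullet> (((1 - t) *\<^sub>R A + t *\<^sub>R B) *v x)" .
  qed
  moreover have "\<forall>i. ((1 - t) *\<^sub>R A + t *\<^sub>R B) $ i $ i = 1"
    using ell_diag[OF assms(1)] ell_diag[OF assms(2)] by (simp add: algebra_simps)
  ultimately show ?thesis unfolding elliptope_def by simp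
qed


lemma abs_prod_le: "\<bar>(a::real) * b\<bar> \<le> (a * a + b * b) / 2"
proof -
  have "0 \<le> (\<bar>a\<bar> - \<bar>b\<bar>) * (\<bar>a\<bar> - \<bar>b\<bar>)" by simp
  then have "2 * (\<bar>a\<bar> * \<bar>b\<bar>) \<le> \<bar>a\<bar> * \<bar>a\<bar> + \<bar>b\<bar> * \<bar>b\<bar>" by (simp add: algebra_simps)
  then show ?thesis by (simp add: abs_mult)
qed

lemma lin_aux: "\<bar>p\<bar> \<le> (a + b) / 2 \<Longrightarrow> a \<le> c \<Longrightarrow> b \<le> c \<Longrightarrow> \<bar>p\<bar> \<le> (c::real)"
  by (simp add: field_simps)

lemma quad_bound: "\<bar>(x::real^'n) \<bullet> (D *v x)\<bar> \<le> n1 D * (x \<bullet> x)"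
proof -
  have e: "x \<bullet> (D *v x) = (\<Sum>k\<in>UNIV. \<Sum>l\<in>UNIV. x $ k * (D $ k $ l * x $ l))"
    by (simp add: inner_vec_def matrix_vector_mult_def sum_distrib_left)
  have "\<bar>\<Sum>k\<in>UNIV. \<Sum>l\<in>UNIV. x $ k * (D $ k $ l * x $ l)\<bar> \<le> (\<Sum>k\<in>UNIV. \<Sum>l\<in>UNIV. \<bar>x $ k * (D $ k $ l * x $ l)\<bar>)"
    by (rule order_trans[OF sum_abs], rule sum_mono, rule sum_abs)
  also have "\<dots> \<le> (\<Sum>k\<in>UNIV. \<Sum>l\<in>UNIV. \<bar>D $ k $ l\<bar> * (x \<bullet> x))"
  proof (rule sum_mono, rule sum_mono)
    fix k l
    have "\<bar>x $ k * x $ l\<bar> \<le> x \<bullet> x"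
      using abs_prod_le[of "x $ k" "x $ l"] inner_self_ge_comp[of x k] inner_self_ge_comp[of x l] by (rule lin_aux)
    then have "\<bar>D $ k $ l\<bar> * \<bar>x $ k * x $ l\<bar> \<le> \<bar>D $ k $ l\<bar> * (x \<bullet> x)"
      by (simp add: mult_left_mono)
    then show "\<bar>x $ k * (D $ k $ l * x $ l)\<bar> \<le> \<bar>D $ k $ l\<bar> * (x \<bullet> x)"
      by (simp add: abs_mult algebra_simps)
  qed
  also have "\<dots> = n1 D * (x \<bullet> x)" by (simp add: n1_def sum_distrib_right)
  finally show ?thesis using e by simp
qed

lemma id_plus_ell:
  fixes D :: "real^'n^'n"
  assumes "transpose D = D" "\<And>k. D $ k $ k = 0" "n1 D \<le> 1"
  shows "mat 1 + D \<in> elliptope"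
proof -
  have "transpose (mat 1 + D) = mat 1 + D"
    using assms(1) by (simp add: transpose_def vec_eq_iff mat_def)
  moreover have "psd (mat 1 + D)"
    unfolding psd_def
  proof
    fix x :: "real^'n"
    have "x \<bullet> ((mat 1 + D) *v x) = x \<bullet> x + x \<bullet> (D *v x)"
      by (simp add: matrix_vector_mult_add_rdistrib inner_add_right)
    moreover have "\<bar>x \<bullet> (D *v x)\<bar> \<le> x \<bullet> x"
      using quad_bound[of x D] assms(3) by (meson inner_ge_zero mult_left_le_one_le n1_nonneg order_trans)
    ultimately show "0 \<le> x \<bullet> ((mat 1 + D) *v x)" by linarith
  qed
  moreover have "\<forall>i. (mat 1 + D) $ i $ i = 1" using assms(2) by (simp add: mat_def)
  ultimately show ?thesis unfolding elliptope_def by simp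
qed

lemma n1_zero: "n1 A = 0 \<Longrightarrow> A = 0"
  using n1_ge_entry[of A] by (metis abs_le_zero_iff vec_eq_iff zero_index)

lemma lip:
  fixes \<phi> :: "real^'n^'n \<Rightarrow> real^'n^'n"
  assumes aff: "affine_on elliptope \<phi>" and into: "\<And>x. x \<in> elliptope \<Longrightarrow> \<phi> x \<in> elliptope"
    and A: "A \<in> elliptope" and B: "B \<in> elliptope"
  shows "n1 (\<phi> B - \<phi> A) \<le> real CARD('n) ^ 2 * n1 (B - A)"
proof (cases "n1 (B - A) = 0")
  case True
  then have "B = A" using n1_zero by fastforce
  then show ?thesis by (simp add: n1_def)
next
  case False
  define n where "n = n1 (B - A)"
  have n0: "n > 0" using False n1_nonneg[of "B - A"] unfolding n_def by linarith
  define D where "D = (1 / n) *\<^sub>R (B - A)"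
  have tB: "transpose A = A" "transpose B = B" using A B unfolding elliptope_def by auto
  have tD: "transpose D = D" using tB by (simp add: D_def transpose_def vec_eq_iff)
  have tD': "transpose (- D) = - D" using tD by (simp add: transpose_def vec_eq_iff)
  have dD: "\<And>k. D $ k $ k = 0" using ell_diag[OF A] ell_diag[OF B] by (simp add: D_def)
  have nD: "n1 D = 1" using n0 by (simp add: D_def n1_scale n_def)
  have nD': "n1 (- D) = 1" using nD n1_scale[of "-1" D] by simp
  define Cp where "Cp = mat 1 + D"
  define Cm where "Cm = mat 1 + (- D)"
  have Cp: "Cp \<in> elliptope" unfolding Cp_def by (rule id_plus_ell[OF tD dD]) (simp add: nD)
  have Cm: "Cm \<in> elliptope" unfolding Cm_def by (rule id_plus_ell[OF tD']) (simp_all add: dD nD')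
  define t where "t = n / (2 + n)"
  have t0: "0 \<le> t" "t \<le> 1" using n0 by (auto simp: t_def)
  have tt: "1 - t = t * (2 / n)" using n0 by (simp add: t_def field_simps)
  have "Cp - Cm = D + D" by (simp add: Cp_def Cm_def)
  also have "\<dots> = 2 *\<^sub>R D" by (rule scaleR_2[symmetric])
  also have "\<dots> = (2 / n) *\<^sub>R (B - A)" by (simp add: D_def)
  finally have CC: "Cp - Cm = (2 / n) *\<^sub>R (B - A)" .
  have h: "(1 - t) *\<^sub>R (B - A) = t *\<^sub>R (Cp - Cm)" using CC tt by simp
  have eq: "(1 - t) *\<^sub>R B + t *\<^sub>R Cm = (1 - t) *\<^sub>R A + t *\<^sub>R Cp"
    using h by (simp add: algebra_simps)
  have "(1 - t) *\<^sub>R \<phi> B + t *\<^sub>R \<phi> Cm = (1 - t) *\<^sub>R \<phi> A + t *\<^sub>R \<phi> Cp"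
    using aff B Cm A Cp t0 eq unfolding affine_on_def by metis
  then have h2: "(1 - t) *\<^sub>R (\<phi> B - \<phi> A) = t *\<^sub>R (\<phi> Cp - \<phi> Cm)"
    by (simp add: algebra_simps)
  have "n1 (\<phi> Cp - \<phi> Cm) \<le> n1 (\<phi> Cp) + n1 (- \<phi> Cm)"
    using n1_add[of "\<phi> Cp" "- \<phi> Cm"] by simp
  also have "\<dots> \<le> 2 * real CARD('n) ^ 2"
    using n1_ell[OF into[OF Cp]] n1_ell[OF into[OF Cm]] n1_scale[of "-1" "\<phi> Cm"] by simp
  finally have b: "n1 (\<phi> Cp - \<phi> Cm) \<le> 2 * real CARD('n) ^ 2" .
  have "(1 - t) * n1 (\<phi> B - \<phi> A) = t * n1 (\<phi> Cp - \<phi> Cm)"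
    using arg_cong[OF h2, of n1] t0 by (simp add: n1_scale)
  then have "t * ((2 / n) * n1 (\<phi> B - \<phi> A)) \<le> t * (2 * real CARD('n) ^ 2)"
    using b t0 tt by (simp add: mult_left_mono mult.assoc)
  moreover have "t > 0" using n0 by (simp add: t_def)
  ultimately have "(2 / n) * n1 (\<phi> B - \<phi> A) \<le> 2 * real CARD('n) ^ 2"
    by (meson mult_le_cancel_left_pos)
  have "n1 (\<phi> B - \<phi> A) = (n / 2) * ((2 / n) * n1 (\<phi> B - \<phi> A))" using n0 by simp
  also have "\<dots> \<le> (n / 2) * (2 * real CARD('n) ^ 2)"
    using \<open>(2 / n) * n1 (\<phi> B - \<phi> A) \<le> 2 * real CARD('n) ^ 2\<close> n0 by (intro mult_left_mono) auto
  also have "\<dots> = real CARD('n) ^ 2 * n1 (B - A)" by (simp add: n_def)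
  finally show ?thesis .
qed


lemma inv_aff:
  fixes \<sigma> :: "real^'n^'n \<Rightarrow> real^'n^'n"
  assumes aff: "affine_on elliptope \<sigma>" and bij: "bij_betw \<sigma> elliptope elliptope"
  shows "affine_on elliptope (inv_into elliptope \<sigma>)" "bij_betw (inv_into elliptope \<sigma>) elliptope elliptope"
proof -
  have surj: "\<sigma> ` elliptope = elliptope" and inj: "inj_on \<sigma> elliptope"
    using bij by (auto simp: bij_betw_def)
  show "bij_betw (inv_into elliptope \<sigma>) elliptope elliptope"
    using bij_betw_inv_into[OF bij] .
  show "affine_on elliptope (inv_into elliptope \<sigma>)"
    unfolding affine_on_def
  proof (intro ballI allI impI)
    fix x y :: "real^'n^'n" and t :: real
    assume x: "x \<in> elliptope" and y: "y \<in> elliptope" and t: "0 \<le> t \<and> t \<le> 1"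
    define a where "a = inv_into elliptope \<sigma> x"
    define b where "b = inv_into elliptope \<sigma> y"
    have a: "a \<in> elliptope" "\<sigma> a = x" using x surj unfolding a_def by (auto intro: inv_into_into f_inv_into_f)
    have b: "b \<in> elliptope" "\<sigma> b = y" using y surj unfolding b_def by (auto intro: inv_into_into f_inv_into_f)
    have c: "(1 - t) *\<^sub>R a + t *\<^sub>R b \<in> elliptope" using convex_ell a b t by auto
    have "\<sigma> ((1 - t) *\<^sub>R a + t *\<^sub>R b) = (1 - t) *\<^sub>R x + t *\<^sub>R y"
      using aff a b t unfolding affine_on_def by auto
    then have "inv_into elliptope \<sigma> ((1 - t) *\<^sub>R x + t *\<^sub>R y) = (1 - t) *\<^sub>R a + t *\<^sub>R b"
      using inv_into_f_f[OF inj c] by simp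
    then show "inv_into elliptope \<sigma> ((1 - t) *\<^sub>R x + t *\<^sub>R y) =
        (1 - t) *\<^sub>R inv_into elliptope \<sigma> x + t *\<^sub>R inv_into elliptope \<sigma> y"
      by (simp add: a_def b_def)
  qed
qed

lemma ising_ell:
  fixes X :: "real^'n^'n"
  assumes "X \<in> ising" shows "X \<in> elliptope"
proof -
  obtain s :: "real^'n" where X: "X = (\<chi> i j. s $ i * s $ j)" and s: "\<forall>i. s $ i = 1 \<or> s $ i = -1"
    using assms unfolding ising_def by blast
  have "transpose X = X" by (simp add: X transpose_def vec_eq_iff mult.commute)
  moreover have "\<forall>i. X $ i $ i = 1" using s by (auto simp: X) (metis mult_minus_left mult_1 minus_minus)
  moreover have "psd X"
    unfolding psd_def
  proof
    fix x :: "real^'n"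
    have "X *v x = (s \<bullet> x) *\<^sub>R s"
      by (simp add: X vec_eq_iff matrix_vector_mult_def inner_vec_def sum_distrib_left mult_ac)
    then have "x \<bullet> (X *v x) = (s \<bullet> x) * (s \<bullet> x)" by (simp add: inner_commute)
    then show "0 \<le> x \<bullet> (X *v x)" by simp
  qed
  ultimately show ?thesis unfolding elliptope_def by simp
qed

definition Fl :: "real^'n^'n \<Rightarrow> real^'n^'n \<Rightarrow> real" where
  "Fl X P = (\<Sum>k\<in>UNIV. \<Sum>l\<in>UNIV. X $ k $ l * P $ k $ l)"

lemma Fl_comb: "Fl X (a *\<^sub>R P + b *\<^sub>R Q) = a * Fl X P + b * Fl X Q"
  by (simp add: Fl_def sum.distrib sum_distrib_left algebra_simps)

lemma ising_n1:
  fixes X P :: "real^'n^'n"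
  assumes X: "X \<in> ising" and P: "P \<in> elliptope"
  shows "n1 (X - P) = Fl X X - Fl X P"
proof -
  obtain s :: "real^'n" where X: "X = (\<chi> i j. s $ i * s $ j)" and s: "\<forall>i. s $ i = 1 \<or> s $ i = -1"
    using X unfolding ising_def by blast
  have e: "\<bar>X $ k $ l - P $ k $ l\<bar> = X $ k $ l * X $ k $ l - X $ k $ l * P $ k $ l" for k l
  proof -
    have "X $ k $ l = 1 \<or> X $ k $ l = -1" using s[rule_format, of k] s[rule_format, of l] by (auto simp: X)
    moreover have "\<bar>P $ k $ l\<bar> \<le> 1" by (rule ell_bound[OF P])
    ultimately show ?thesis by auto
  qed
  show ?thesis unfolding n1_def Fl_def
    by (simp add: e sum_subtractf)
qed

lemma sym_inner: assumes "transpose W = W" shows "v \<bullet> ((W::real^'n^'n) *v u) = (W *v v) \<bullet> u"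
proof -
  have "v \<bullet> (W *v u) = (v v* W) \<bullet> u" by (simp add: dot_lmul_matrix)
  also have "v v* W = transpose W *v v" by simp
  finally show ?thesis using assms by simp
qed

lemma psd_kernel:
  assumes W: "W \<in> elliptope" and v: "v \<bullet> (W *v v) = 0"
  shows "(W::real^'n^'n) *v v = 0"
proof (rule ccontr)
  assume ne: "W *v v \<noteq> 0"
  define u where "u = W *v v"
  define a where "a = u \<bullet> u"
  define c where "c = u \<bullet> (W *v u)"
  have tW: "transpose W = W" using W unfolding elliptope_def by auto
  have a0: "a > 0" using ne unfolding a_def u_def by simp
  have c0: "c \<ge> 0" unfolding c_def by (rule ell_psd[OF W])
  define t where "t = - a / (c + 1)"
  have exp: "(v + t *\<^sub>R u) \<bullet> (W *v (v + t *\<^sub>R u))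
      = v \<bullet> (W *v v) + t * (v \<bullet> (W *v u)) + t * (u \<bullet> (W *v v)) + t * t * (u \<bullet> (W *v u))"
    by (simp add: matrix_vector_right_distrib matrix_vector_mult_scaleR inner_add_left inner_add_right algebra_simps)
  have "v \<bullet> (W *v u) = a" using sym_inner[OF tW, of v u] by (simp add: a_def u_def)
  moreover have "u \<bullet> (W *v v) = a" by (simp add: a_def u_def)
  ultimately have q: "(v + t *\<^sub>R u) \<bullet> (W *v (v + t *\<^sub>R u)) = 2 * t * a + t * t * c"
    using exp v by (simp add: c_def)
  have c1: "c + 1 \<noteq> 0" using c0 by simp
  have r: "t * (c + 1) = - a" using c1 by (simp add: t_def)
  have "(c + 1) * (c + 1) * (2 * t * a + t * t * c) = 2 * a * (t * (c + 1)) * (c + 1) + (t * (c + 1)) * (t * (c + 1)) * c"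
    by (simp add: algebra_simps)
  also have "\<dots> = - (a * a * (c + 2))" by (simp only: r) (simp add: algebra_simps)
  also have "\<dots> < 0" using a0 c0 by simp
  finally have neg: "(c + 1) * (c + 1) * (2 * t * a + t * t * c) < 0" .
  have "0 \<le> 2 * t * a + t * t * c" using ell_psd[OF W, of "v + t *\<^sub>R u"] q by simp
  then have "0 \<le> (c + 1) * (c + 1) * (2 * t * a + t * t * c)" by simp
  then show False using neg by simp
qed

lemma ising_char:
  assumes W: "W \<in> elliptope" and one: "\<And>k l. \<bar>W $ k $ l\<bar> = 1"
  shows "(W::real^'n^'n) \<in> ising"
proof -
  define a0 where "a0 = (undefined :: 'n)"
  define s where "s = (\<chi> m. W $ m $ a0)"
  have key: "W $ m $ l = W $ m $ a0 * W $ l $ a0" for m l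
  proof -
    define c where "c = W $ l $ a0"
    have cc: "c * c = 1" using one[of l a0] unfolding c_def by (metis abs_mult_self_eq mult_1)
    have "(axis l 1 + axis a0 (-c)) \<bullet> (W *v (axis l 1 + axis a0 (-c))) = 0"
      using quad2[of l 1 a0 "-c" W] ell_diag[OF W] ell_sym[OF W, of a0 l] cc by (simp add: c_def)
    then have "W *v (axis l 1 + axis a0 (-c)) = 0" by (rule psd_kernel[OF W])
    then have "(W *v (axis l 1 + axis a0 (-c))) $ m = 0" by simp
    then show ?thesis by (simp add: matrix_vector_right_distrib mv_axis c_def)
  qed
  have "W = (\<chi> i j. s $ i * s $ j)" unfolding vec_eq_iff s_def by (auto intro!: key)
  moreover have "s $ i = 1 \<or> s $ i = -1" for i using one[of i a0] by (simp add: s_def abs_if split: if_splits)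
  ultimately show ?thesis unfolding ising_def by blast
qed


definition cmat :: "'n \<Rightarrow> 'n \<Rightarrow> real \<Rightarrow> real \<Rightarrow> real^'n^'n" where
  "cmat i j a b = (\<chi> k. if k = i then axis i a + axis j b else axis k 1)"

definition congm :: "real^'n^'n \<Rightarrow> 'n \<Rightarrow> 'n \<Rightarrow> real \<Rightarrow> real \<Rightarrow> real^'n^'n" where
  "congm W i j a b = cmat i j a b ** W ** transpose (cmat i j a b)"

lemma triple_entry: "((M::real^'n^'n) ** W ** transpose M) $ k $ l = M $ k \<bullet> (W *v M $ l)"
proof -
  have "((M ** W ** transpose M) $ k $ l) = (\<Sum>p\<in>UNIV. (\<Sum>q\<in>UNIV. M $ k $ q * W $ q $ p) * M $ l $ p)"
    by (simp add: matrix_matrix_mult_def transpose_def)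
  also have "\<dots> = (\<Sum>p\<in>UNIV. \<Sum>q\<in>UNIV. M $ k $ q * (W $ q $ p * M $ l $ p))"
    by (simp add: sum_distrib_left sum_distrib_right mult_ac)
  also have "\<dots> = (\<Sum>q\<in>UNIV. \<Sum>p\<in>UNIV. M $ k $ q * (W $ q $ p * M $ l $ p))"
    by (rule sum.swap)
  also have "\<dots> = M $ k \<bullet> (W *v M $ l)"
    by (simp add: inner_vec_def matrix_vector_mult_def sum_distrib_left)
  finally show ?thesis .
qed

lemma congm_entry:
  assumes W: "W \<in> elliptope" and ij: "i \<noteq> j"
  shows "congm W i j a b $ k $ l =
    (if k = i then (if l = i then a*a + 2*a*b*W$i$j + b*b else a * W$i$l + b * W$j$l)
     else (if l = i then a * W$i$k + b * W$j$k else W$k$l))"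
proof -
  have s: "\<And>p q. W $ p $ q = W $ q $ p" using ell_sym[OF W] by blast
  have d: "\<And>p. W $ p $ p = 1" using ell_diag[OF W] by blast
  have row: "cmat i j a b $ k = (if k = i then axis i a + axis j b else axis k 1)" for k
    by (simp add: cmat_def)
  show ?thesis
    unfolding congm_def triple_entry row
    using ij
    by (auto simp: matrix_vector_right_distrib inner_add_left inner_add_right inner_axis_mv d algebra_simps s[of k i] s[of k j] s[of j i])
qed

lemma congm_ell:
  fixes W :: "real^'n^'n"
  assumes W: "W \<in> elliptope" and ij: "i \<noteq> j" and ab: "a*a + 2*a*b*W$i$j + b*b = 1"
  shows "congm W i j a b \<in> elliptope"
proof -
  define M where "M = cmat i j a b"
  have tW: "transpose W = W" using W unfolding elliptope_def by auto
  have "transpose (congm W i j a b) = congm W i j a b"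
    unfolding congm_def M_def[symmetric]
    by (simp add: matrix_transpose_mul tW matrix_mul_assoc)
  moreover have "psd (congm W i j a b)"
    unfolding psd_def
  proof
    fix x :: "real^'n"
    have "x \<bullet> (congm W i j a b *v x) = x \<bullet> (M *v (W *v (transpose M *v x)))"
      by (simp only: congm_def M_def[symmetric] matrix_vector_mul_assoc matrix_mul_assoc)
    also have "\<dots> = (transpose M *v x) \<bullet> (W *v (transpose M *v x))"
      by (simp add: dot_lmul_matrix[symmetric])
    also have "\<dots> \<ge> 0" by (rule ell_psd[OF W])
    finally show "0 \<le> x \<bullet> (congm W i j a b *v x)" .
  qed
  moreover have "\<forall>k. congm W i j a b $ k $ k = 1"
    using congm_entry[OF W ij] ab ell_diag[OF W] by simp
  ultimately show ?thesis unfolding elliptope_def by simp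
qed

lemma ab_ok:
  fixes e w d q :: real
  assumes d: "d = 1 - w * w" and q: "q = e * e + d" and q0: "q \<noteq> 0"
  shows "((d - e*e + 2*e*w)/q) * ((d - e*e + 2*e*w)/q) + 2 * ((d - e*e + 2*e*w)/q) * (-2*e/q) * w
      + (-2*e/q) * (-2*e/q) = 1"
proof -
  have num: "(d - e*e + 2*e*w) * (d - e*e + 2*e*w) + 2 * (d - e*e + 2*e*w) * (-2*e) * w + (-2*e) * (-2*e) = q * q"
    unfolding q d by algebra
  have "((d - e*e + 2*e*w)/q) * ((d - e*e + 2*e*w)/q) + 2 * ((d - e*e + 2*e*w)/q) * (-2*e/q) * w
      + (-2*e/q) * (-2*e/q) = ((d - e*e + 2*e*w) * (d - e*e + 2*e*w) + 2 * (d - e*e + 2*e*w) * (-2*e) * w + (-2*e) * (-2*e)) / (q * q)"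
    using q0 by (simp add: field_simps)
  also have "\<dots> = 1" using num q0 by simp
  finally show ?thesis .
qed


lemma main_sub:
  fixes \<sigma> :: "real^'n^'n \<Rightarrow> real^'n^'n"
  assumes aff: "affine_on elliptope \<sigma>" and bij: "bij_betw \<sigma> elliptope elliptope"
  shows "\<sigma> ` ising \<subseteq> ising"
proof
  fix Z assume "Z \<in> \<sigma> ` ising"
  then obtain X where X: "X \<in> ising" and Z: "Z = \<sigma> X" by auto
  define W where "W = \<sigma> X"
  have XE: "X \<in> elliptope" by (rule ising_ell[OF X])
  have inj: "inj_on \<sigma> elliptope" and surj: "\<sigma> ` elliptope = elliptope"
    using bij by (auto simp: bij_betw_def)
  have WE: "W \<in> elliptope" using XE surj W_def by auto
  define \<tau> where "\<tau> = inv_into elliptope \<sigma>"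
  have aff\<tau>: "affine_on elliptope \<tau>" and bij\<tau>: "bij_betw \<tau> elliptope elliptope"
    using inv_aff[OF aff bij] by (auto simp: \<tau>_def)
  have into\<sigma>: "\<And>x. x \<in> elliptope \<Longrightarrow> \<sigma> x \<in> elliptope" using surj by auto
  have into\<tau>: "\<And>x. x \<in> elliptope \<Longrightarrow> \<tau> x \<in> elliptope" using bij\<tau> by (auto simp: bij_betw_def)
  have \<sigma>\<tau>: "\<And>y. y \<in> elliptope \<Longrightarrow> \<sigma> (\<tau> y) = y"
    using surj unfolding \<tau>_def by (metis f_inv_into_f)
  have \<tau>W: "\<tau> W = X" using inv_into_f_f[OF inj XE] by (simp add: \<tau>_def W_def)
  show "Z \<in> ising"
  proof (rule ccontr)
    assume nZ: "Z \<notin> ising"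
    then have "W \<notin> ising" using Z W_def by simp
    then obtain i j where ne1: "\<bar>W$i$j\<bar> \<noteq> 1" using ising_char[OF WE] by blast
    define w where "w = W$i$j"
    have wl: "\<bar>w\<bar> < 1" using ell_bound[OF WE, of i j] ne1 w_def by simp
    have ij: "i \<noteq> j" using ne1 ell_diag[OF WE] by auto
    define K where "K = real CARD('n) ^ 2"
    have K0: "K \<ge> 0" by (simp add: K_def)
    define C where "C = 2 * K * K * K"
    have C0: "C \<ge> 0" using K0 by (simp add: C_def)
    define d where "d = 1 - w * w"
    have "\<bar>w\<bar> * \<bar>w\<bar> \<le> \<bar>w\<bar> * 1" using wl by (intro mult_left_mono) auto
    then have ww: "w * w < 1" using wl by (simp add: abs_mult_self_eq)
    have d0: "d > 0" using ww by (simp add: d_def)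
    define e where "e = d / (2 + C)"
    have e0: "e > 0" using d0 C0 by (simp add: e_def)
    have c2: "2 + C \<noteq> 0" using C0 by simp
    have "2 * e + C * e = e * (2 + C)" by (simp add: algebra_simps)
    also have "\<dots> = d" using c2 by (simp add: e_def)
    finally have ed: "d = 2 * e + C * e" by simp
    define q where "q = e * e + d"
    have q0: "q > 0" using d0 by (simp add: q_def add_nonneg_pos)
    have qm: "q = (-e) * (-e) + d" by (simp add: q_def)
    define Ap where "Ap = (d - e*e + 2*e*w)/q"
    define Bp where "Bp = -2*e/q"
    define Am where "Am = (d - (-e)*(-e) + 2*(-e)*w)/q"
    define Bm where "Bm = -2*(-e)/q"
    have abp: "Ap*Ap + 2*Ap*Bp*W$i$j + Bp*Bp = 1"
      using ab_ok[OF d_def q_def] q0 by (simp add: Ap_def Bp_def w_def[symmetric])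
    have abm: "Am*Am + 2*Am*Bm*W$i$j + Bm*Bm = 1"
      using ab_ok[OF d_def qm] q0 unfolding Am_def Bm_def w_def[symmetric] by simp
    define Yp where "Yp = congm W i j Ap Bp"
    define Ym where "Ym = congm W i j Am Bm"
    have YpE: "Yp \<in> elliptope" unfolding Yp_def by (rule congm_ell[OF WE ij abp])
    have YmE: "Ym \<in> elliptope" unfolding Ym_def by (rule congm_ell[OF WE ij abm])
    define Mid where "Mid = (1 - 1/2) *\<^sub>R Yp + (1/2) *\<^sub>R Ym"
    have MidE: "Mid \<in> elliptope" unfolding Mid_def by (rule convex_ell[OF YpE YmE]) auto
    define r where "r = 2*e*e/q"
    have r0: "r \<ge> 0" using q0 by (simp add: r_def)
    have s1: "Ap + Am = 2 * (d - e*e) / q" using q0 by (simp add: Ap_def Am_def field_simps)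
    have s2: "Bp + Bm = 0" by (simp add: Bp_def Bm_def)
    have key: "x - ((1 - 1/2) * (Ap * x + Bp * y) + (1/2) * (Am * x + Bm * y)) = x * r" for x y
    proof -
      have "x - ((1 - 1/2) * (Ap * x + Bp * y) + (1/2) * (Am * x + Bm * y))
          = x - ((Ap + Am) / 2 * x + (Bp + Bm) / 2 * y)" by (simp add: field_simps)
      also have "\<dots> = x - ((d - e*e) / q) * x" unfolding s1 s2 using q0 by (simp add: field_simps)
      also have "\<dots> = x * ((q - (d - e*e)) / q)" using q0 by (simp add: field_simps)
      also have "q - (d - e*e) = 2*e*e" by (simp add: q_def)
      finally show ?thesis by (simp add: r_def)
    qed
    have entry_eq: "(W - Mid)$k$l = W$k$l - ((1 - 1/2) * Yp$k$l + (1/2) * Ym$k$l)" for k l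
      by (simp add: Mid_def)
    have ent: "\<bar>(W - Mid)$k$l\<bar> \<le> r" for k l
    proof -
      have sm: "\<And>x. \<bar>x\<bar> \<le> 1 \<Longrightarrow> \<bar>x * r\<bar> \<le> r"
        using r0 by (simp add: abs_mult mult_left_le_one_le)
      show ?thesis
      proof (cases "k = i")
        case True
        show ?thesis
        proof (cases "l = i")
          case True
          have "(W - Mid)$k$l = 1 - ((1 - 1/2) * 1 + (1/2) * 1)"
            unfolding entry_eq using \<open>k = i\<close> True abp abm ell_diag[OF WE]
            by (simp add: Yp_def Ym_def congm_entry[OF WE ij])
          then show ?thesis using r0 by simp
        next
          case False
          have "(W - Mid)$k$l = W$i$l - ((1 - 1/2) * (Ap * W$i$l + Bp * W$j$l) + (1/2) * (Am * W$i$l + Bm * W$j$l))"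
            unfolding entry_eq using \<open>k = i\<close> False
            by (simp add: Yp_def Ym_def congm_entry[OF WE ij])
          also have "\<dots> = W$i$l * r" by (rule key)
          finally show ?thesis using sm ell_bound[OF WE, of i l] by simp
        qed
      next
        case False
        show ?thesis
        proof (cases "l = i")
          case True
          have "(W - Mid)$k$l = W$i$k - ((1 - 1/2) * (Ap * W$i$k + Bp * W$j$k) + (1/2) * (Am * W$i$k + Bm * W$j$k))"
            unfolding entry_eq using False True ell_sym[OF WE, of k i]
            by (simp add: Yp_def Ym_def congm_entry[OF WE ij])
          also have "\<dots> = W$i$k * r" by (rule key)
          finally show ?thesis using sm ell_bound[OF WE, of i k] by simp
        next
          case False
          have "(W - Mid)$k$l = 0"
            unfolding entry_eq using \<open>k \<noteq> i\<close> False
            by (simp add: Yp_def Ym_def congm_entry[OF WE ij])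
          then show ?thesis using r0 by simp
        qed
      qed
    qed
    have nM: "n1 (W - Mid) \<le> K * r" unfolding K_def by (rule n1_bound[OF ent])
    have lowv: "(W - Yp)$i$j = 2*e*(d + e*w)/q"
    proof -
      have "(W - Yp)$i$j = w - (Ap * w + Bp)"
        using ij ell_diag[OF WE] by (simp add: Yp_def congm_entry[OF WE ij] w_def)
      also have "\<dots> = (w * q - (d - e*e + 2*e*w) * w + 2*e) / q"
        using q0 by (simp add: Ap_def Bp_def field_simps)
      also have "w * q - (d - e*e + 2*e*w) * w + 2*e = 2*e*(d + e*w)"
        unfolding q_def d_def by algebra
      finally show ?thesis .
    qed
    have "2*e*(d + e*w)/q \<le> \<bar>(W - Yp)$i$j\<bar>" unfolding lowv by (rule abs_ge_self)
    then have low: "2*e*(d + e*w)/q \<le> n1 (W - Yp)"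
      using n1_ge_entry[of "W - Yp" i j] by (rule order_trans)
    define Pp where "Pp = \<tau> Yp"
    define Pm where "Pm = \<tau> Ym"
    have PpE: "Pp \<in> elliptope" and PmE: "Pm \<in> elliptope" using into\<tau> YpE YmE by (auto simp: Pp_def Pm_def)
    have \<sigma>Pp: "\<sigma> Pp = Yp" using \<sigma>\<tau>[OF YpE] by (simp add: Pp_def)
    have \<tau>Mid: "\<tau> Mid = (1 - 1/2) *\<^sub>R Pp + (1/2) *\<^sub>R Pm"
    proof -
      have "\<forall>t. 0 \<le> t \<and> t \<le> 1 \<longrightarrow> \<tau> ((1-t) *\<^sub>R Yp + t *\<^sub>R Ym) = (1-t) *\<^sub>R \<tau> Yp + t *\<^sub>R \<tau> Ym"
        using aff\<tau> YpE YmE unfolding affine_on_def by blast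
      then have "\<tau> ((1 - 1/2) *\<^sub>R Yp + (1/2) *\<^sub>R Ym) = (1 - 1/2) *\<^sub>R \<tau> Yp + (1/2) *\<^sub>R \<tau> Ym"
        by (drule_tac spec[of _ "1/2"]) simp
      then show ?thesis by (simp only: Mid_def Pp_def Pm_def)
    qed
    have "n1 (X - \<tau> Mid) = Fl X X - Fl X (\<tau> Mid)" by (rule ising_n1[OF X into\<tau>[OF MidE]])
    also have "\<dots> = Fl X X - ((1 - 1/2) * Fl X Pp + (1/2) * Fl X Pm)" by (simp only: \<tau>Mid Fl_comb)
    finally have n1a: "n1 (X - \<tau> Mid) = Fl X X - ((1 - 1/2) * Fl X Pp + (1/2) * Fl X Pm)" .
    have n1p: "n1 (X - Pp) = Fl X X - Fl X Pp" by (rule ising_n1[OF X PpE])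
    have n1m: "n1 (X - Pm) = Fl X X - Fl X Pm" by (rule ising_n1[OF X PmE])
    have "2 * n1 (X - \<tau> Mid) = n1 (X - Pp) + n1 (X - Pm)"
      unfolding n1a n1p n1m by (simp add: algebra_simps)
    then have h3: "n1 (X - Pp) \<le> 2 * n1 (X - \<tau> Mid)" using n1_nonneg[of "X - Pm"] by linarith
    have h1: "n1 (W - Yp) \<le> K * n1 (X - Pp)"
      using lip[OF aff into\<sigma> PpE XE] \<sigma>Pp by (simp add: W_def K_def)
    have h2: "n1 (X - \<tau> Mid) \<le> K * n1 (W - Mid)"
      using lip[OF aff\<tau> into\<tau> MidE WE] \<tau>W by (simp add: K_def)
    have "2*e*(d + e*w)/q \<le> K * n1 (X - Pp)" using low h1 by linarith
    also have "\<dots> \<le> K * (2 * n1 (X - \<tau> Mid))" using h3 K0 by (rule mult_left_mono)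
    also have "\<dots> \<le> K * (2 * (K * n1 (W - Mid)))" using h2 K0 by (intro mult_left_mono) auto
    also have "\<dots> \<le> K * (2 * (K * (K * r)))" using nM K0 by (intro mult_left_mono) auto
    also have "\<dots> = (C * (2*e*e)) / q" by (simp add: C_def r_def)
    finally have "2*e*(d + e*w)/q \<le> (C * (2*e*e)) / q" .
    then have "2*e*(d + e*w) \<le> C * (2*e*e)" using q0 by (simp add: divide_le_cancel)
    then have "(2*e) * (d + e*w) \<le> (2*e) * (C*e)" by (simp add: algebra_simps)
    then have up: "d + e*w \<le> C*e" using e0 by (simp add: mult_le_cancel_left_pos)
    have "e * (-1) \<le> e * w" using wl e0 by (intro mult_left_mono) auto
    then have ew: "- e \<le> e * w" by simp
    show False using up ew ed e0 by linarith
  qed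
qed


theorem lemma5:
  fixes \<sigma> :: "real^'n^'n \<Rightarrow> real^'n^'n"
  assumes "affine_on elliptope \<sigma>"
    and "bij_betw \<sigma> elliptope elliptope"
  shows "\<sigma> ` ising = ising"
proof
  show "\<sigma> ` ising \<subseteq> ising" by (rule main_sub[OF assms])
  show "ising \<subseteq> \<sigma> ` ising"
  proof
    fix Z :: "real^'n^'n" assume Z: "Z \<in> ising"
    define \<tau> where "\<tau> = inv_into elliptope \<sigma>"
    have "\<tau> ` ising \<subseteq> ising"
      unfolding \<tau>_def by (rule main_sub[OF inv_aff[OF assms]])
    then have "\<tau> Z \<in> ising" using Z by auto
    moreover have "\<sigma> (\<tau> Z) = Z"
      using ising_ell[OF Z] assms(2) unfolding \<tau>_def bij_betw_def by (metis f_inv_into_f)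
    ultimately show "Z \<in> \<sigma> ` ising" by (metis image_eqI)
  qed
qed

end
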